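(* Let $\mathcal A=(d_0,\dots,d_k,\psi)$ be a neural network architecture with a $C^1$ activation function $\psi\colon\mathbb R\to\mathbb R$ whose derivative is locally Lipschitz. Let $\ell\colon\mathbb R^{d_k}\times\mathbb R^{d_k}\to[0,\infty)$ be a $C^1$ loss function with locally Lipschitz gradient, and let $f\colon\mathbb R^{d_0}\to\mathbb R^{d_k}$ be a $C^1$ function with locally Lipschitz differential. Let $\mu$ be a probability measure on $\mathbb R^{d_0}$ such that either $\mu=\frac1n\sum_{i=1}^n\delta_{x_i}$ for some $n\in\mathbb N$ and $x_1,\dots,x_n\in\mathbb R^{d_0}$, or $d\mu(x)=p(x)\,dx$ for a $C^1$ definable function $p\colon\mathbb R^{d_0}\to[0,\infty)$ of compact support. Then $\mathcal L\colon\mathbb R^{d(\mathcal A)}\to\mathbb R$, $\mathcal L(\theta)=\mathbb E_{x\sim\mu}[\ell(\mathcal N^{\mathcal A}_\theta(x),f(x))]$, has locally Lipschitz gradient.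
   Context: A $C^1$ map $g\colon\mathbb R^n\to\mathbb R^m$ has locally Lipschitz differential (gradient, derivative) if every point has an open neighbourhood $U$ and $L>0$ with $\|Dg(x_1)-Dg(x_2)\|\le L\|x_1-x_2\|$ for $x_1,x_2\in U$. A loss function is $\ell\colon\mathbb R^n\times\mathbb R^n\to[0,\infty)$ with $\ell(x,y)=0\iff x=y$. Definable means definable in some o-minimal structure (a collection $\mathcal S_n\subseteq\mathcal P(\mathbb R^n)$ closed under finite Boolean operations, products and coordinate projections, containing all sets $\{p>0\}$, $\{p=0\}$ for real polynomials $p$, with every set in $\mathcal S_1$ a finite union of points and intervals; a function is definable if its graph is). A neural network architecture is $\mathcal A=(d_0,\dots,d_k,\psi)$ with positive integers $d_i$ and $\psi\colon\mathbb R\to\mathbb R$; $d(\mathcal A)=\sum_{i=1}^kd_i(d_{i-1}+1)$; $\theta\in\mathbb R^{d(\mathcal A)}$ is identified with $(W_1,b_1,\dots,W_k,b_k)$, $W_i\in\mathbb R^{d_i\times d_{i-1}},b_i\in\mathbb R^{d_i}$; $\mathcal N^{\mathcal A}_\theta=f_k\circ\dots\circ f_1$ with $f_i(x)=\psi^{(d_i)}(W_ix+b_i)$ for $i<k$ ($\psi$ componentwise), $f_k(x)=W_kx+b_k$. $\delta_x$ is the Dirac measure at $x$. *)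

theory Defs
  imports "HOL-Probability.Probability"
begin

definition C1_map :: "('a::real_normed_vector \<Rightarrow> 'b::real_normed_vector) \<Rightarrow> bool" where
  "C1_map g \<longleftrightarrow> (\<exists>D::'a \<Rightarrow> ('a \<Rightarrow>\<^sub>L 'b).
     (\<forall>x. (g has_derivative blinfun_apply (D x)) (at x)) \<and> continuous_on UNIV D)"

definition C1_loclip :: "('a::real_normed_vector \<Rightarrow> 'b::real_normed_vector) \<Rightarrow> bool" where
  "C1_loclip g \<longleftrightarrow> (\<exists>D::'a \<Rightarrow> ('a \<Rightarrow>\<^sub>L 'b).
     (\<forall>x. (g has_derivative blinfun_apply (D x)) (at x)) \<and> continuous_on UNIV D \<and>
     (\<forall>x. \<exists>U L. open U \<and> x \<in> U \<and> L > 0 \<and>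
        (\<forall>x1\<in>U. \<forall>x2\<in>U. norm (D x1 - D x2) \<le> L * dist x1 x2)))"

definition loss_fun :: "('a \<Rightarrow> 'a \<Rightarrow> real) \<Rightarrow> bool" where
  "loss_fun l \<longleftrightarrow> (\<forall>x y. l x y \<ge> 0 \<and> (l x y = 0 \<longleftrightarrow> x = y))"

definition enum_idx :: "nat \<Rightarrow> 'n::finite" where
  "enum_idx = (SOME f. bij_betw f {..<CARD('n)} (UNIV::'n set))"

definition vec_to_fun :: "real ^ 'n \<Rightarrow> (nat \<Rightarrow> real)" where
  "vec_to_fun x = (\<lambda>i. if i < CARD('n) then x $ (enum_idx i :: 'n) else 0)"

definition fun_to_vec :: "(nat \<Rightarrow> real) \<Rightarrow> real ^ 'n" where
  "fun_to_vec v = (\<chi> j. v (inv_into {..<CARD('n)} (enum_idx :: nat \<Rightarrow> 'n) j))"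

definition vec_list :: "real ^ 'n \<Rightarrow> real list" where
  "vec_list x = map (\<lambda>i. x $ (enum_idx i :: 'n)) [0..<CARD('n)]"

text \<open>Architecture ds = [d_0, ..., d_k]; k = length ds - 1.
  Parameter vector theta (entries 0 ..< nn_dim ds) = (W_1, b_1, ..., W_k, b_k),
  each W_i stored row-major, followed by b_i.\<close>

definition nn_dim :: "nat list \<Rightarrow> nat" where
  "nn_dim ds = (\<Sum>i\<in>{1..length ds - 1}. ds!i * (ds!(i-1) + 1))"

definition layer_off :: "nat list \<Rightarrow> nat \<Rightarrow> nat" where
  "layer_off ds i = (\<Sum>j\<in>{1..<i}. ds!j * (ds!(j-1) + 1))"

definition nn_W :: "nat list \<Rightarrow> (nat \<Rightarrow> real) \<Rightarrow> nat \<Rightarrow> nat \<Rightarrow> nat \<Rightarrow> real" where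
  "nn_W ds \<theta> i r c = \<theta> (layer_off ds i + r * ds!(i-1) + c)"

definition nn_b :: "nat list \<Rightarrow> (nat \<Rightarrow> real) \<Rightarrow> nat \<Rightarrow> nat \<Rightarrow> real" where
  "nn_b ds \<theta> i r = \<theta> (layer_off ds i + ds!i * ds!(i-1) + r)"

definition nn_affine :: "nat list \<Rightarrow> (nat \<Rightarrow> real) \<Rightarrow> nat \<Rightarrow> (nat \<Rightarrow> real) \<Rightarrow> (nat \<Rightarrow> real)" where
  "nn_affine ds \<theta> i x = (\<lambda>r. if r < ds!i
      then (\<Sum>c<ds!(i-1). nn_W ds \<theta> i r c * x c) + nn_b ds \<theta> i r else 0)"

fun nn_layers :: "nat list \<Rightarrow> (real \<Rightarrow> real) \<Rightarrow> (nat \<Rightarrow> real) \<Rightarrow> nat \<Rightarrow> (nat \<Rightarrow> real) \<Rightarrow> (nat \<Rightarrow> real)" where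
  "nn_layers ds \<psi> \<theta> 0 x = x"
| "nn_layers ds \<psi> \<theta> (Suc i) x =
     (let y = nn_affine ds \<theta> (Suc i) (nn_layers ds \<psi> \<theta> i x) in
      if Suc i < length ds - 1 then (\<lambda>r. if r < ds!(Suc i) then \<psi> (y r) else 0) else y)"

definition nn_eval :: "nat list \<Rightarrow> (real \<Rightarrow> real) \<Rightarrow> (nat \<Rightarrow> real) \<Rightarrow> (nat \<Rightarrow> real) \<Rightarrow> (nat \<Rightarrow> real)" where
  "nn_eval ds \<psi> \<theta> x = nn_layers ds \<psi> \<theta> (length ds - 1) x"

definition nn_fun :: "nat list \<Rightarrow> (real \<Rightarrow> real) \<Rightarrow> real ^ 'p \<Rightarrow> real ^ 'i \<Rightarrow> real ^ 'o" where
  "nn_fun ds \<psi> \<theta> x = fun_to_vec (nn_eval ds \<psi> (vec_to_fun \<theta>) (vec_to_fun x))"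

text \<open>Polynomial functions R^n -> R (points of R^n are real lists of length n).\<close>
inductive_set poly_funs :: "nat \<Rightarrow> (real list \<Rightarrow> real) set" for n where
  const: "(\<lambda>_. c) \<in> poly_funs n"
| var: "i < n \<Longrightarrow> (\<lambda>xs. xs ! i) \<in> poly_funs n"
| add: "p \<in> poly_funs n \<Longrightarrow> q \<in> poly_funs n \<Longrightarrow> (\<lambda>xs. p xs + q xs) \<in> poly_funs n"
| mult: "p \<in> poly_funs n \<Longrightarrow> q \<in> poly_funs n \<Longrightarrow> (\<lambda>xs. p xs * q xs) \<in> poly_funs n"

definition Rn :: "nat \<Rightarrow> real list set" where
  "Rn n = {xs. length xs = n}"

definition o_minimal :: "(nat \<Rightarrow> real list set set) \<Rightarrow> bool" where
  "o_minimal S \<longleftrightarrow>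
    (\<forall>n. \<forall>A\<in>S n. A \<subseteq> Rn n) \<and>
    (\<forall>n. Rn n \<in> S n) \<and>
    (\<forall>n. \<forall>A\<in>S n. \<forall>B\<in>S n. A \<union> B \<in> S n) \<and>
    (\<forall>n. \<forall>A\<in>S n. Rn n - A \<in> S n) \<and>
    (\<forall>n m. \<forall>A\<in>S n. \<forall>B\<in>S m. {xs @ ys | xs ys. xs \<in> A \<and> ys \<in> B} \<in> S (n + m)) \<and>
    (\<forall>n js. \<forall>A\<in>S n. sorted_wrt (<) js \<and> (\<forall>j\<in>set js. j < n) \<longrightarrow>
        (\<lambda>xs. map (\<lambda>j. xs ! j) js) ` A \<in> S (length js)) \<and>
    (\<forall>n. \<forall>p\<in>poly_funs n. {xs\<in>Rn n. p xs > 0} \<in> S n \<and> {xs\<in>Rn n. p xs = 0} \<in> S n) \<and>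
    (\<forall>A\<in>S 1. \<exists>F. finite F \<and> (\<forall>I\<in>F. is_interval (I::real set)) \<and>
        (\<lambda>xs. xs ! 0) ` A = \<Union>F)"

definition definable_fun :: "(real ^ 'n \<Rightarrow> real) \<Rightarrow> bool" where
  "definable_fun p \<longleftrightarrow> (\<exists>S. o_minimal S \<and> {vec_list x @ [p x] | x. True} \<in> S (CARD('n) + 1))"

end

theory Submission
  imports Defs
begin


definition llip :: "('a::metric_space \<Rightarrow> 'b::real_normed_vector) \<Rightarrow> bool" where
  "llip g \<longleftrightarrow> (\<forall>x. \<exists>e>0. \<exists>L. L-lipschitz_on (ball x e) g)"

lemma llipE:
  assumes "llip g" obtains e L where "e > 0" "L-lipschitz_on (ball x e) g"
  using assms unfolding llip_def by blast

lemma llip_cont: assumes "llip g" shows "continuous_on UNIV g"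
proof (rule continuous_at_imp_continuous_on, intro ballI)
  fix x :: 'a
  obtain e L where "e > 0" "L-lipschitz_on (ball x e) g" using assms llipE by blast
  then have "continuous (at x within ball x e) g"
    by (intro lipschitz_on_continuous_within) auto
  then show "continuous (at x) g" using continuous_within_open[of x "ball x e" g] \<open>e > 0\<close> by simp
qed

lemma llip_const: "llip (\<lambda>x. c)"
  unfolding llip_def using lipschitz_on_constant zero_less_one by blast

lemma llip_linear: assumes "bounded_linear f" shows "llip f"
proof -
  obtain K where K: "K > 0" "\<And>x. norm (f x) \<le> norm x * K"
    using bounded_linear.pos_bounded[OF assms] by blast
  have "K-lipschitz_on UNIV f"
    by (rule lipschitz_onI) (use K in \<open>auto simp: dist_norm linear_diff[OF bounded_linear.linear[OF assms], symmetric] mult.commute\<close>)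
  then show ?thesis unfolding llip_def
    by (metis gt_ex lipschitz_on_subset subset_UNIV)
qed

lemma llip_add: assumes "llip g" "llip h" shows "llip (\<lambda>x. g x + h x)"
  unfolding llip_def
proof
  fix x
  obtain e1 L1 where 1: "e1 > 0" "L1-lipschitz_on (ball x e1) g" using assms(1) llipE by blast
  obtain e2 L2 where 2: "e2 > 0" "L2-lipschitz_on (ball x e2) h" using assms(2) llipE by blast
  have "(L1+L2)-lipschitz_on (ball x (min e1 e2)) (\<lambda>x. g x + h x)"
    by (intro lipschitz_on_add lipschitz_on_subset[OF 1(2)] lipschitz_on_subset[OF 2(2)]) auto
  then show "\<exists>e>0. \<exists>L. L-lipschitz_on (ball x e) (\<lambda>x. g x + h x)" using 1 2
    by (intro exI[of _ "min e1 e2"]) auto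
qed

lemma llip_compose: assumes "llip g" "llip h" shows "llip (\<lambda>x. g (h x))"
  unfolding llip_def
proof
  fix x
  obtain e1 L1 where 1: "e1 > 0" "L1-lipschitz_on (ball (h x) e1) g" using assms(1) llipE by blast
  obtain e2 L2 where 2: "e2 > 0" "L2-lipschitz_on (ball x e2) h" using assms(2) llipE by blast
  have "continuous (at x) h" using llip_cont[OF assms(2)] by (simp add: continuous_on_eq_continuous_at)
  then obtain d where d: "d > 0" "\<And>y. dist y x < d \<Longrightarrow> dist (h y) (h x) < e1"
    using 1(1) unfolding continuous_at_eps_delta by blast
  let ?e = "min d e2"
  have s: "h ` ball x ?e \<subseteq> ball (h x) e1" using d by (auto simp: dist_commute)
  have "(L1*L2)-lipschitz_on (ball x ?e) (\<lambda>x. g (h x))"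
    by (intro lipschitz_on_compose2 lipschitz_on_subset[OF 2(2)] lipschitz_on_subset[OF 1(2) s]) auto
  then show "\<exists>e>0. \<exists>L. L-lipschitz_on (ball x e) (\<lambda>x. g (h x))" using d 2
    by (intro exI[of _ ?e]) auto
qed

lemma lipschitz_bound_ball:
  fixes g :: "'a::metric_space \<Rightarrow> 'b::real_normed_vector"
  assumes "L-lipschitz_on (ball x e) g" "y \<in> ball x e"
  shows "norm (g y) \<le> norm (g x) + L * e"
proof -
  have L: "L \<ge> 0" using assms lipschitz_on_nonneg by blast
  have "dist x y < e" using assms(2) by simp
  moreover have "0 \<le> dist x y" by simp
  ultimately have "x \<in> ball x e" by (simp; linarith)
  then have "dist (g y) (g x) \<le> L * dist y x" using assms lipschitz_onD by blast
  also have "\<dots> \<le> L * e" using assms(2) L by (intro mult_left_mono) (auto simp: dist_commute)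
  moreover have "norm (g y) - norm (g x) \<le> dist (g y) (g x)"
    unfolding dist_norm by (rule norm_triangle_ineq2)
  ultimately show ?thesis by linarith
qed

lemma llip_bilinear:
  assumes bb: "bounded_bilinear pr" and "llip g" "llip h"
  shows "llip (\<lambda>x. pr (g x) (h x))"
  unfolding llip_def
proof
  fix x
  obtain e1 L1 where 1: "e1 > 0" "L1-lipschitz_on (ball x e1) g" using assms(2) llipE by blast
  obtain e2 L2 where 2: "e2 > 0" "L2-lipschitz_on (ball x e2) h" using assms(3) llipE by blast
  obtain K where K: "K \<ge> 0" "\<And>a b. norm (pr a b) \<le> norm a * norm b * K"
    using bounded_bilinear.nonneg_bounded[OF bb] by blast
  define e where "e = min e1 e2"
  define Bg where "Bg = norm (g x) + L1 * e1"
  define Bh where "Bh = norm (h x) + L2 * e2"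
  have L1: "L1 \<ge> 0" and L2: "L2 \<ge> 0" using 1 2 lipschitz_on_nonneg by blast+
  have Bg0: "Bg \<ge> 0" unfolding Bg_def using L1 1 by simp
  have Bh0: "Bh \<ge> 0" unfolding Bh_def using L2 2 by simp
  have bg: "norm (g y) \<le> Bg" if "y \<in> ball x e" for y
    using lipschitz_bound_ball[OF 1(2)] that unfolding Bg_def e_def by auto
  have bh: "norm (h y) \<le> Bh" if "y \<in> ball x e" for y
    using lipschitz_bound_ball[OF 2(2)] that unfolding Bh_def e_def by auto
  have "(K * (L1 * Bh + Bg * L2))-lipschitz_on (ball x e) (\<lambda>x. pr (g x) (h x))"
  proof (rule lipschitz_onI)
    fix y z assume y: "y \<in> ball x e" and z: "z \<in> ball x e"
    have dg: "norm (g y - g z) \<le> L1 * dist y z"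
      using lipschitz_onD[OF 1(2)] y z unfolding e_def by (auto simp: dist_norm)
    have dh: "norm (h y - h z) \<le> L2 * dist y z"
      using lipschitz_onD[OF 2(2)] y z unfolding e_def by (auto simp: dist_norm)
    have eq: "pr (g y) (h y) - pr (g z) (h z) = pr (g y - g z) (h y) + pr (g z) (h y - h z)"
      by (simp add: bounded_bilinear.diff_left[OF bb] bounded_bilinear.diff_right[OF bb])
    have "norm (pr (g y) (h y) - pr (g z) (h z)) \<le> norm (pr (g y - g z) (h y)) + norm (pr (g z) (h y - h z))"
      unfolding eq by (rule norm_triangle_ineq)
    also have "\<dots> \<le> norm (g y - g z) * norm (h y) * K + norm (g z) * norm (h y - h z) * K"
      using K by (intro add_mono) auto
    also have "\<dots> \<le> (L1 * dist y z) * Bh * K + Bg * (L2 * dist y z) * K"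
      using K dg dh bg[OF z] bh[OF y] L1 Bg0 by (intro add_mono mult_right_mono mult_mono) auto
    also have "\<dots> = K * (L1 * Bh + Bg * L2) * dist y z" by (simp add: algebra_simps)
    finally show "dist (pr (g y) (h y)) (pr (g z) (h z)) \<le> K * (L1 * Bh + Bg * L2) * dist y z"
      by (simp add: dist_norm)
  next
    show "0 \<le> K * (L1 * Bh + Bg * L2)"
      using K L1 L2 Bg0 Bh0 by (intro mult_nonneg_nonneg add_nonneg_nonneg) auto
  qed
  then show "\<exists>e>0. \<exists>L. L-lipschitz_on (ball x e) (\<lambda>x. pr (g x) (h x))"
    using 1 2 unfolding e_def by (intro exI[of _ "min e1 e2"]) auto
qed

lemma llip_sum: assumes "finite I" "\<And>i. i \<in> I \<Longrightarrow> llip (g i)"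
  shows "llip (\<lambda>x. \<Sum>i\<in>I. g i x)"
  using assms by (induction I rule: finite_induct) (auto intro: llip_const llip_add)



lemma llip_iff:
  fixes D :: "'a::metric_space \<Rightarrow> 'b::real_normed_vector"
  shows "(\<forall>x. \<exists>U L. open U \<and> x \<in> U \<and> L > 0 \<and> (\<forall>x1\<in>U. \<forall>x2\<in>U. norm (D x1 - D x2) \<le> L * dist x1 x2))
     \<longleftrightarrow> llip D"
proof
  assume H: "\<forall>x. \<exists>U L. open U \<and> x \<in> U \<and> L > 0 \<and> (\<forall>x1\<in>U. \<forall>x2\<in>U. norm (D x1 - D x2) \<le> L * dist x1 x2)"
  show "llip D" unfolding llip_def
  proof
    fix x
    obtain U L where U: "open U" "x \<in> U" "L > 0" "\<forall>x1\<in>U. \<forall>x2\<in>U. norm (D x1 - D x2) \<le> L * dist x1 x2"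
      using H by blast
    obtain e where e: "e > 0" "ball x e \<subseteq> U" using U openE by blast
    have "L-lipschitz_on (ball x e) D"
    proof (rule lipschitz_onI)
      fix a b assume "a \<in> ball x e" "b \<in> ball x e"
      then have "a \<in> U" "b \<in> U" using e by auto
      then show "dist (D a) (D b) \<le> L * dist a b" using U(4) by (simp add: dist_norm)
    qed (use U in simp)
    then show "\<exists>e>0. \<exists>L. L-lipschitz_on (ball x e) D" using e by blast
  qed
next
  assume H: "llip D"
  show "\<forall>x. \<exists>U L. open U \<and> x \<in> U \<and> L > 0 \<and> (\<forall>x1\<in>U. \<forall>x2\<in>U. norm (D x1 - D x2) \<le> L * dist x1 x2)"
  proof
    fix x
    obtain e L where e: "e > 0" "L-lipschitz_on (ball x e) D" using H llipE by blast
    have L: "L \<ge> 0" using e lipschitz_on_nonneg by blast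
    have "\<forall>x1\<in>ball x e. \<forall>x2\<in>ball x e. norm (D x1 - D x2) \<le> (L+1) * dist x1 x2"
    proof (intro ballI)
      fix x1 x2 assume "x1 \<in> ball x e" "x2 \<in> ball x e"
      then have "norm (D x1 - D x2) \<le> L * dist x1 x2"
        using lipschitz_onD[OF e(2)] by (simp add: dist_norm[of "D _"])
      also have "\<dots> \<le> (L+1) * dist x1 x2" by (simp add: distrib_right)
      finally show "norm (D x1 - D x2) \<le> (L+1) * dist x1 x2" .
    qed
    then show "\<exists>U L. open U \<and> x \<in> U \<and> L > 0 \<and> (\<forall>x1\<in>U. \<forall>x2\<in>U. norm (D x1 - D x2) \<le> L * dist x1 x2)"
      using e L by (intro exI[of _ "ball x e"] exI[of _ "L+1"]) auto
  qed
qed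

lemma C1_iff: "C1_loclip g \<longleftrightarrow> (\<exists>D. (\<forall>x. (g has_derivative blinfun_apply (D x)) (at x)) \<and> llip D)"
proof
  assume "C1_loclip g"
  then obtain D where "\<forall>x. (g has_derivative blinfun_apply (D x)) (at x)" "llip D"
    unfolding C1_loclip_def llip_iff by blast
  then show "\<exists>D. (\<forall>x. (g has_derivative blinfun_apply (D x)) (at x)) \<and> llip D" by blast
next
  assume "\<exists>D. (\<forall>x. (g has_derivative blinfun_apply (D x)) (at x)) \<and> llip D"
  then obtain D where D: "\<forall>x. (g has_derivative blinfun_apply (D x)) (at x)" "llip D" by blast
  have "continuous_on UNIV D" using llip_cont[OF D(2)] .
  moreover note llip_iff[THEN iffD2, OF D(2)]
  ultimately show "C1_loclip g" unfolding C1_loclip_def using D(1) by blast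
qed

lemma C1I: "(\<And>x. (g has_derivative blinfun_apply (D x)) (at x)) \<Longrightarrow> llip D \<Longrightarrow> C1_loclip g"
  unfolding C1_iff by blast

lemma C1E: assumes "C1_loclip g"
  obtains D where "\<And>x. (g has_derivative blinfun_apply (D x)) (at x)" "llip D"
  using assms unfolding C1_iff by blast

lemma C1_llip:
  fixes g :: "'a::real_normed_vector \<Rightarrow> 'b::real_normed_vector"
  assumes "C1_loclip g" shows "llip g"
  unfolding llip_def
proof
  fix x
  obtain D where D: "\<And>x. (g has_derivative blinfun_apply (D x)) (at x)" "llip D"
    using assms C1E by blast
  obtain e L where e: "e > 0" "L-lipschitz_on (ball x e) D" using D(2) llipE by blast
  have L: "L \<ge> 0" using e lipschitz_on_nonneg by blast
  define B where "B = norm (D x) + L * e"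
  have "B-lipschitz_on (ball x e) g"
  proof (rule bounded_derivative_imp_lipschitz)
    fix y assume "y \<in> ball x e"
    show "(g has_derivative blinfun_apply (D y)) (at y within ball x e)"
      using D(1) has_derivative_at_withinI by blast
    show "onorm (blinfun_apply (D y)) \<le> B"
      using lipschitz_bound_ball[OF e(2) \<open>y \<in> ball x e\<close>] unfolding B_def
      by (simp add: norm_blinfun.rep_eq)
  next
    show "convex (ball x e)" by simp
    show "0 \<le> B" unfolding B_def using L e by simp
  qed
  then show "\<exists>e>0. \<exists>L. L-lipschitz_on (ball x e) g" using e by blast
qed

lemma C1_cont: assumes "C1_loclip g" shows "continuous_on UNIV g"
proof -
  obtain D where "\<And>x. (g has_derivative blinfun_apply (D x)) (at x)" using assms C1E by metis
  then show ?thesis by (intro continuous_at_imp_continuous_on ballI has_derivative_continuous) 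
qed

lemma C1_const: "C1_loclip (\<lambda>x::'a::real_normed_vector. c::'b::real_normed_vector)"
proof (rule C1I[where D="\<lambda>_. 0"])
  fix x
  show "((\<lambda>x. c) has_derivative blinfun_apply 0) (at x)"
    by (simp add: zero_blinfun.rep_eq)
qed (rule llip_const)

lemma C1_linear: assumes "bounded_linear f" shows "C1_loclip f"
proof (rule C1I[where D="\<lambda>_. Blinfun f"])
  fix x
  show "(f has_derivative blinfun_apply (Blinfun f)) (at x)"
    unfolding bounded_linear_Blinfun_apply[OF assms] by (rule bounded_linear_imp_has_derivative[OF assms])
qed (rule llip_const)

lemma C1_add: assumes "C1_loclip g" "C1_loclip h" shows "C1_loclip (\<lambda>x. g x + h x)"
proof -
  obtain Dg where g: "\<And>x. (g has_derivative blinfun_apply (Dg x)) (at x)" "llip Dg" using assms(1) C1E by blast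
  obtain Dh where h: "\<And>x. (h has_derivative blinfun_apply (Dh x)) (at x)" "llip Dh" using assms(2) C1E by blast
  show ?thesis
  proof (rule C1I[where D="\<lambda>x. Dg x + Dh x"])
    fix x
    have e: "blinfun_apply (Dg x + Dh x) = (\<lambda>v. Dg x v + Dh x v)" by (auto simp: fun_eq_iff blinfun.add_left)
    show "((\<lambda>x. g x + h x) has_derivative blinfun_apply (Dg x + Dh x)) (at x)"
      unfolding e by (intro has_derivative_add g h)
  qed (rule llip_add[OF g(2) h(2)])
qed

lemma C1_compose: assumes "C1_loclip g" "C1_loclip h" shows "C1_loclip (\<lambda>x. g (h x))"
proof -
  obtain Dg where g: "\<And>x. (g has_derivative blinfun_apply (Dg x)) (at x)" "llip Dg" using assms(1) C1E by blast
  obtain Dh where h: "\<And>x. (h has_derivative blinfun_apply (Dh x)) (at x)" "llip Dh" using assms(2) C1E by blast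
  show ?thesis
  proof (rule C1I[where D="\<lambda>x. Dg (h x) o\<^sub>L Dh x"])
    fix x
    have e: "blinfun_apply (Dg (h x) o\<^sub>L Dh x) = (\<lambda>v. Dg (h x) (Dh x v))" by (auto simp: fun_eq_iff)
    show "((\<lambda>x. g (h x)) has_derivative blinfun_apply (Dg (h x) o\<^sub>L Dh x)) (at x)"
      unfolding e by (rule has_derivative_compose[OF h(1) g(1)])
  next
    show "llip (\<lambda>x. Dg (h x) o\<^sub>L Dh x)"
      by (rule llip_bilinear[OF bounded_bilinear_blinfun_compose llip_compose[OF g(2) C1_llip[OF assms(2)]] h(2)])
  qed
qed

lemma C1_mult:
  fixes g h :: "'a::real_normed_vector \<Rightarrow> real"
  assumes "C1_loclip g" "C1_loclip h" shows "C1_loclip (\<lambda>x. g x * h x)"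
proof -
  obtain Dg where g: "\<And>x. (g has_derivative blinfun_apply (Dg x)) (at x)" "llip Dg" using assms(1) C1E by blast
  obtain Dh where h: "\<And>x. (h has_derivative blinfun_apply (Dh x)) (at x)" "llip Dh" using assms(2) C1E by blast
  show ?thesis
  proof (rule C1I[where D="\<lambda>x. g x *\<^sub>R Dh x + h x *\<^sub>R Dg x"])
    fix x
    have e: "blinfun_apply (g x *\<^sub>R Dh x + h x *\<^sub>R Dg x) = (\<lambda>v. g x * Dh x v + Dg x v * h x)"
      by (auto simp: fun_eq_iff blinfun.add_left blinfun.scaleR_left)
    show "((\<lambda>x. g x * h x) has_derivative blinfun_apply (g x *\<^sub>R Dh x + h x *\<^sub>R Dg x)) (at x)"
      unfolding e by (rule has_derivative_mult[OF g(1) h(1)])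
  next
    show "llip (\<lambda>x. g x *\<^sub>R Dh x + h x *\<^sub>R Dg x)"
      by (rule llip_add[OF llip_bilinear[OF bounded_bilinear_scaleR C1_llip[OF assms(1)] h(2)]
                llip_bilinear[OF bounded_bilinear_scaleR C1_llip[OF assms(2)] g(2)]])
  qed
qed

lemma C1_sum: assumes "finite I" "\<And>i. i \<in> I \<Longrightarrow> C1_loclip (g i)"
  shows "C1_loclip (\<lambda>x. \<Sum>i\<in>I. g i x)"
  using assms
proof (induction I rule: finite_induct)
  case empty
  show ?case by (simp add: C1_const)
next
  case (insert a F)
  have e: "(\<lambda>x. \<Sum>i\<in>insert a F. g i x) = (\<lambda>x. g a x + (\<Sum>i\<in>F. g i x))"
    by (rule ext) (simp only: sum.insert[OF insert(1,2)])
  have "C1_loclip (g a)" by (rule insert(4)) simp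
  moreover have "C1_loclip (\<lambda>x. \<Sum>i\<in>F. g i x)" by (rule insert(3), rule insert(4)) simp
  ultimately show ?case unfolding e by (rule C1_add)
qed

lemma C1_nth: assumes "C1_loclip g" shows "C1_loclip (\<lambda>x. g x $ j)"
  using C1_compose[OF C1_linear[OF bounded_linear_vec_nth] assms] .

lemma C1_vec:
  fixes g :: "'a::real_normed_vector \<Rightarrow> real ^ 'n"
  assumes "\<And>j. C1_loclip (\<lambda>x. g x $ j)" shows "C1_loclip g"
proof -
  have e: "g = (\<lambda>x. \<Sum>j\<in>UNIV. (g x $ j) *\<^sub>R axis j 1)"
  proof
    fix x
    have "g x = (\<Sum>j\<in>UNIV. (g x $ j) *s axis j 1)" by (rule basis_expansion[symmetric])
    then show "g x = (\<Sum>j\<in>UNIV. (g x $ j) *\<^sub>R axis j 1)" by (simp only: scalar_mult_eq_scaleR)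
  qed
  show ?thesis
  proof (subst e, rule C1_sum)
    show "finite (UNIV :: 'n set)" by simp
    fix j show "C1_loclip (\<lambda>x. (g x $ j) *\<^sub>R axis j 1)"
      by (rule C1_compose[OF C1_linear[OF bounded_linear_scaleR_left] assms])
  qed
qed

lemma C1_pair: assumes "C1_loclip g" "C1_loclip h" shows "C1_loclip (\<lambda>x. (g x, h x))"
proof -
  have e: "(\<lambda>x. (g x, h x)) = (\<lambda>x. (g x, 0) + (0, h x))" by auto
  have l1: "bounded_linear (\<lambda>a. (a, 0))" by (intro bounded_linear_Pair) auto
  have l2: "bounded_linear (\<lambda>a. (0, a))" by (intro bounded_linear_Pair) auto
  show ?thesis unfolding e
    by (intro C1_add C1_compose[OF C1_linear[OF l1] assms(1)] C1_compose[OF C1_linear[OF l2] assms(2)])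
qed

lemma C1_id: "C1_loclip (\<lambda>x. x)" by (rule C1_linear) simp
lemma C1_fst: "C1_loclip fst" by (rule C1_linear[OF bounded_linear_fst])
lemma C1_snd: "C1_loclip snd" by (rule C1_linear[OF bounded_linear_snd])



lemma C1_vtf:
  fixes F :: "'a::real_normed_vector \<Rightarrow> real ^ 'n"
  assumes "C1_loclip F" shows "C1_loclip (\<lambda>z. vec_to_fun (F z) k)"
proof (cases "k < CARD('n)")
  case True
  then show ?thesis unfolding vec_to_fun_def using C1_nth[OF assms] by simp
next
  case False
  then show ?thesis unfolding vec_to_fun_def by (simp add: C1_const)
qed

lemma C1_if_const: "(c \<Longrightarrow> C1_loclip A) \<Longrightarrow> (\<not> c \<Longrightarrow> C1_loclip B) \<Longrightarrow> C1_loclip (\<lambda>z. if c then A z else B z)"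
  by (cases c) (simp_all add: eta_contract_eq)

lemma nn_layers_C1:
  fixes \<psi> :: "real \<Rightarrow> real"
  assumes act: "C1_loclip \<psi>"
  shows "C1_loclip (\<lambda>z :: (real ^ 'p) \<times> (real ^ 'i). nn_layers ds \<psi> (vec_to_fun (fst z)) i (vec_to_fun (snd z)) r)"
proof (induction i arbitrary: r)
  case 0
  show ?case by (simp add: C1_vtf C1_snd)
next
  case (Suc i)
  define Y where "Y = (\<lambda>(z :: (real ^ 'p) \<times> (real ^ 'i)) r. nn_affine ds (vec_to_fun (fst z)) (Suc i) (nn_layers ds \<psi> (vec_to_fun (fst z)) i (vec_to_fun (snd z))) r)"
  have Y: "C1_loclip (\<lambda>z. Y z r)" for r
  proof (cases "r < ds ! Suc i")
    case True
    have e: "(\<lambda>z. Y z r) = (\<lambda>z. (\<Sum>c<ds!i. vec_to_fun (fst z) (layer_off ds (Suc i) + r * ds!i + c) *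
        nn_layers ds \<psi> (vec_to_fun (fst z)) i (vec_to_fun (snd z)) c) + vec_to_fun (fst z) (layer_off ds (Suc i) + ds!Suc i * ds!i + r))"
      using True by (simp add: Y_def nn_affine_def nn_W_def nn_b_def)
    show ?thesis unfolding e
      by (intro C1_add C1_sum finite_lessThan C1_mult C1_vtf C1_fst Suc.IH)
  next
    case False
    then show ?thesis by (simp add: Y_def nn_affine_def C1_const)
  qed
  have e: "(\<lambda>z. nn_layers ds \<psi> (vec_to_fun (fst z)) (Suc i) (vec_to_fun (snd z)) r) =
     (\<lambda>z. if Suc i < length ds - 1 then (if r < ds!(Suc i) then \<psi> (Y z r) else 0) else Y z r)"
    by (rule ext) (simp add: Y_def Let_def)
  show ?case unfolding e
    by (intro C1_if_const C1_compose[OF act] Y C1_const)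
qed

lemma nn_fun_C1:
  fixes \<psi> :: "real \<Rightarrow> real"
  assumes act: "C1_loclip \<psi>"
  shows "C1_loclip (\<lambda>z :: (real ^ 'p) \<times> (real ^ 'i). (nn_fun ds \<psi> (fst z) (snd z) :: real ^ 'o))"
proof (rule C1_vec)
  fix j :: 'o
  show "C1_loclip (\<lambda>z :: (real ^ 'p) \<times> (real ^ 'i). (nn_fun ds \<psi> (fst z) (snd z) :: real ^ 'o) $ j)"
    unfolding nn_fun_def fun_to_vec_def nn_eval_def by (simp add: nn_layers_C1[OF act])
qed

lemma integrand_C1:
  fixes \<psi> :: "real \<Rightarrow> real" and l :: "real ^ 'o \<Rightarrow> real ^ 'o \<Rightarrow> real" and f :: "real ^ 'i \<Rightarrow> real ^ 'o"
  assumes act: "C1_loclip \<psi>" and loss: "C1_loclip (\<lambda>(y, z). l y z)" and target: "C1_loclip f"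
  shows "C1_loclip (\<lambda>z :: (real ^ 'p) \<times> (real ^ 'i). l (nn_fun ds \<psi> (fst z) (snd z)) (f (snd z)))"
  using C1_compose[OF loss C1_pair[OF nn_fun_C1[OF act] C1_compose[OF target C1_snd]]] by simp



lemma unif_lip:
  fixes D :: "('a::metric_space \<times> 'b::metric_space) \<Rightarrow> 'c::real_normed_vector"
  assumes "llip D" "compact K"
  shows "\<exists>e>0. \<exists>L\<ge>0. \<forall>x\<in>K. \<forall>t1\<in>ball t0 e. \<forall>t2\<in>ball t0 e. dist (D (t1,x)) (D (t2,x)) \<le> L * dist t1 t2"
proof -
  have "\<forall>x. \<exists>e. e > 0 \<and> (\<exists>L. L-lipschitz_on (ball (t0,x) e) D)"
    using assms(1) unfolding llip_def by blast
  then obtain e where e: "\<And>x. e x > 0" "\<And>x. \<exists>L. L-lipschitz_on (ball (t0,x) (e x)) D" by metis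
  then obtain L where L: "\<And>x. (L x)-lipschitz_on (ball (t0,x) (e x)) D" by metis
  have L0: "L x \<ge> 0" for x using L lipschitz_on_nonneg by blast
  have "K \<subseteq> (\<Union>x\<in>K. ball x (e x / 2))" using e(1) by force
  then obtain F where F: "F \<subseteq> K" "finite F" "K \<subseteq> (\<Union>x\<in>F. ball x (e x / 2))"
    using compactE_image[OF assms(2), of K "\<lambda>x. ball x (e x / 2)"] by blast
  show ?thesis
  proof (cases "F = {}")
    case True
    then have "K = {}" using F by auto
    then show ?thesis by (intro exI[of _ 1] exI[of _ 0]) auto
  next
    case False
    define e0 where "e0 = Min ((\<lambda>x. e x / 2) ` F)"
    define L1 where "L1 = Max (L ` F)"
    have e0: "e0 > 0" unfolding e0_def using F(2) False e(1) by (subst Min_gr_iff) auto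
    have e0le: "e0 \<le> e y / 2" if "y \<in> F" for y unfolding e0_def using F(2) that by (intro Min_le) auto
    have L1ge: "L y \<le> L1" if "y \<in> F" for y unfolding L1_def using F(2) that by (intro Max_ge) auto
    have L1nn: "L1 \<ge> 0" using False L1ge L0 by (meson all_not_in_conv order_trans)
    have "\<forall>x\<in>K. \<forall>t1\<in>ball t0 e0. \<forall>t2\<in>ball t0 e0. dist (D (t1,x)) (D (t2,x)) \<le> L1 * dist t1 t2"
    proof (intro ballI)
      fix x t1 t2 assume x: "x \<in> K" and t1: "t1 \<in> ball t0 e0" and t2: "t2 \<in> ball t0 e0"
      obtain y where y: "y \<in> F" "dist y x < e y / 2" using F(3) x by auto
      have inb: "(t, x) \<in> ball (t0, y) (e y)" if "t \<in> ball t0 e0" for t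
      proof -
        have "dist (t0, y) (t, x) = sqrt ((dist t0 t)\<^sup>2 + (dist y x)\<^sup>2)" by (simp add: dist_Pair_Pair)
        also have "\<dots> \<le> dist t0 t + dist y x" by (intro sqrt_sum_squares_le_sum) auto
        also have "\<dots> < e y / 2 + e y / 2" using that e0le[OF y(1)] y(2) by (intro add_strict_mono) auto
        finally show ?thesis by simp
      qed
      have "dist (D (t1,x)) (D (t2,x)) \<le> L y * dist (t1,x) (t2,x)"
        using lipschitz_onD[OF L inb[OF t1] inb[OF t2]] .
      also have "dist (t1,x) (t2,x) = dist t1 t2" by (simp add: dist_Pair_Pair)
      also have "L y * dist t1 t2 \<le> L1 * dist t1 t2" using L1ge[OF y(1)] by (intro mult_right_mono) auto
      finally show "dist (D (t1,x)) (D (t2,x)) \<le> L1 * dist t1 t2" .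
    qed
    then show ?thesis using e0 L1nn by blast
  qed
qed



lemma disc_integral:
  fixes F :: "'a::{euclidean_space} \<Rightarrow> real" and M :: "'a measure"
  assumes sets: "sets M = sets borel" and n: "n > 0"
    and em: "\<forall>A\<in>sets borel. emeasure M A = ennreal ((\<Sum>i<n. indicator A (xs i)) / real n)"
    and cont: "continuous_on UNIV F"
  shows "integral\<^sup>L M F = (\<Sum>y\<in>xs ` {..<n}. measure M {y} * F y)"
proof -
  define S where "S = xs ` {..<n}"
  have fin: "finite S" unfolding S_def by simp
  have Sb: "UNIV - S \<in> sets borel" using fin by (intro borel_open) (simp add: open_Diff finite_imp_closed)
  have "(\<Sum>i<n. indicator (UNIV - S) (xs i)) = (0::real)"
    by (intro sum.neutral) (auto simp: S_def indicator_def)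
  then have "emeasure M (UNIV - S) = 0"
    using em Sb by simp
  then have null: "UNIV - S \<in> null_sets M" using Sb sets by (simp add: null_sets_def)
  have sp: "space M = UNIV" using sets_eq_imp_space_eq[OF sets] by simp
  have AE: "AE x in M. x \<in> S"
    by (rule AE_I'[OF null]) (auto simp: sp)
  have singl: "{y} \<in> sets M" for y using sets by simp
  have fm: "emeasure M {y} < \<infinity>" for y using em by simp
  have Fm: "F \<in> borel_measurable M"
    using borel_measurable_continuous_onI[OF cont] measurable_cong_sets[OF sets refl] by blast
  have "integral\<^sup>L M F = integral\<^sup>L M (\<lambda>x. \<Sum>y\<in>S. F y * indicator {y} x)"
  proof (rule integral_cong_AE)
    show "F \<in> borel_measurable M" by fact
    show "(\<lambda>x. \<Sum>y\<in>S. F y * indicator {y} x) \<in> borel_measurable M"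
      using singl by (intro borel_measurable_sum borel_measurable_times borel_measurable_const borel_measurable_indicator) auto
    show "AE x in M. F x = (\<Sum>y\<in>S. F y * indicator {y} x)"
      using AE
    proof (rule AE_mp, intro AE_I2 impI)
      fix x assume "x \<in> S"
      have "(\<Sum>y\<in>S. F y * indicator {y} x) = (\<Sum>y\<in>S. if y = x then F x else 0)"
        by (intro sum.cong) (auto simp: indicator_def)
      also have "\<dots> = F x" using fin \<open>x \<in> S\<close> by simp
      finally show "F x = (\<Sum>y\<in>S. F y * indicator {y} x)" by simp
    qed
  qed
  also have "\<dots> = (\<Sum>y\<in>S. integral\<^sup>L M (\<lambda>x. F y * indicator {y} x))"
    by (rule Bochner_Integration.integral_sum[where f="\<lambda>y x. F y * indicator {y} x"])
       (use singl fm in \<open>auto intro!: integrable_mult_right integrable_real_indicator\<close>)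
  also have "\<dots> = (\<Sum>y\<in>S. measure M {y} * F y)"
    using sp by (intro sum.cong refl) simp
  finally show ?thesis unfolding S_def .
qed

lemma disc_C1:
  fixes G :: "(real ^ 'p) \<times> (real ^ 'i) \<Rightarrow> real" and M :: "(real ^ 'i) measure"
  assumes G: "C1_loclip G"
    and sets: "sets M = sets borel" and n: "n > 0"
    and em: "\<forall>A\<in>sets borel. emeasure M A = ennreal ((\<Sum>i<n. indicator A (xs i)) / real n)"
  shows "C1_loclip (\<lambda>\<theta>. integral\<^sup>L M (\<lambda>x. G (\<theta>, x)))"
proof -
  have Gy: "C1_loclip (\<lambda>\<theta>. G (\<theta>, y))" for y
    using C1_compose[OF G C1_pair[OF C1_id C1_const]] by simp
  have cont: "continuous_on UNIV (\<lambda>x. G (\<theta>, x))" for \<theta>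
    using C1_cont[OF C1_compose[OF G C1_pair[OF C1_const C1_id]]] by simp
  have e: "(\<lambda>\<theta>. integral\<^sup>L M (\<lambda>x. G (\<theta>, x))) = (\<lambda>\<theta>. \<Sum>y\<in>xs ` {..<n}. measure M {y} * G (\<theta>, y))"
    using disc_integral[OF sets n em cont] by simp
  show ?thesis unfolding e
    by (intro C1_sum finite_imageI finite_lessThan C1_mult C1_const Gy)
qed



lemma dens_C1:
  fixes G :: "(real ^ 'p) \<times> (real ^ 'i) \<Rightarrow> real" and p :: "real ^ 'i \<Rightarrow> real"
  assumes G: "C1_loclip G" and pC: "C1_map p" and pnn: "\<forall>x. p x \<ge> 0"
    and supp: "compact (closure {x. p x \<noteq> 0})"
  shows "C1_loclip (\<lambda>\<theta>. integral\<^sup>L (density lborel (\<lambda>x. ennreal (p x))) (\<lambda>x. G (\<theta>, x)))"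
proof -
  obtain DG where DG: "\<And>z. (G has_derivative blinfun_apply (DG z)) (at z)" "llip DG"
    using G C1E by blast
  have DGc: "continuous_on UNIV DG" using llip_cont[OF DG(2)] .
  have pcont: "continuous_on UNIV p"
  proof -
    obtain Dp where "\<And>x. (p has_derivative blinfun_apply (Dp x)) (at x)"
      using pC unfolding C1_map_def by blast
    then show ?thesis by (intro continuous_at_imp_continuous_on ballI has_derivative_continuous)
  qed
  obtain a where a: "closure {x. p x \<noteq> 0} \<subseteq> cbox (-a) a"
    using bounded_subset_cbox_symmetric[OF compact_imp_bounded[OF supp]] by blast
  define C where "C = cbox (-a) a"
  have p0: "p x = 0" if "x \<notin> C" for x
  proof (rule ccontr)
    assume "p x \<noteq> 0"
    then have "x \<in> closure {x. p x \<noteq> 0}" using closure_subset[of "{x. p x \<noteq> 0}"] by auto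
    then show False using a that unfolding C_def by auto
  qed
  have Gc: "continuous_on UNIV G" using C1_cont[OF G] .
  have Gth: "continuous_on UNIV (\<lambda>x. G (\<theta>, x))" for \<theta>
    using C1_cont[OF C1_compose[OF G C1_pair[OF C1_const C1_id]]] by simp
  have Hc: "continuous_on S (\<lambda>x. p x * G (\<theta>, x))" for \<theta> S
    by (intro continuous_on_mult continuous_on_subset[OF pcont] continuous_on_subset[OF Gth]) auto
  have eqint: "integral\<^sup>L (density lborel (\<lambda>x. ennreal (p x))) (\<lambda>x. G (\<theta>, x)) = integral C (\<lambda>x. p x * G (\<theta>, x))" for \<theta>
  proof -
    define H where "H = (\<lambda>x. p x * G (\<theta>, x))"
    have "integral\<^sup>L (density lborel (\<lambda>x. ennreal (p x))) (\<lambda>x. G (\<theta>, x)) = integral\<^sup>L lborel (\<lambda>x. p x *\<^sub>R G (\<theta>, x))"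
      by (rule integral_density) (auto simp: pnn intro: borel_measurable_continuous_onI[OF Gth] borel_measurable_continuous_onI[OF pcont])
    also have "\<dots> = integral\<^sup>L lborel H" by (simp add: H_def)
    finally have 0: "integral\<^sup>L (density lborel (\<lambda>x. ennreal (p x))) (\<lambda>x. G (\<theta>, x)) = integral\<^sup>L lborel H" .
    have HC: "H = (\<lambda>x. indicator C x *\<^sub>R H x)" by (auto simp: p0 H_def indicator_def fun_eq_iff)
    have "integrable lborel (\<lambda>x. indicator C x *\<^sub>R H x)"
      by (rule borel_integrable_compact) (auto simp: C_def H_def intro: Hc)
    then have "integrable lborel H" using HC by simp
    then have 1: "(H has_integral integral\<^sup>L lborel H) UNIV" by (rule has_integral_integral_lborel)
    have "H integrable_on C" unfolding C_def H_def by (rule integrable_continuous) (rule Hc)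
    then have "(H has_integral integral C H) C" by (rule integrable_integral)
    then have "((\<lambda>x. if x \<in> C then H x else 0) has_integral integral C H) UNIV"
      by (subst has_integral_restrict_UNIV)
    moreover have "(\<lambda>x. if x \<in> C then H x else 0) = H" by (auto simp: fun_eq_iff H_def p0)
    ultimately have 2: "(H has_integral integral C H) UNIV" by simp
    show ?thesis unfolding 0 using has_integral_unique[OF 1 2] by (simp add: H_def)
  qed
  define E where "E = Blinfun (\<lambda>h::real ^ 'p. (h, 0::real ^ 'i))"
  have Elin: "bounded_linear (\<lambda>h::real ^ 'p. (h, 0::real ^ 'i))" by (intro bounded_linear_Pair) auto
  have Eapp: "blinfun_apply E = (\<lambda>h. (h, 0))" unfolding E_def by (rule bounded_linear_Blinfun_apply[OF Elin])
  define fx where "fx = (\<lambda>\<theta> x. p x *\<^sub>R (DG (\<theta>, x) o\<^sub>L E))"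
  have fxc: "continuous_on UNIV (\<lambda>z. p (snd z) *\<^sub>R (DG z o\<^sub>L E))"
    by (intro continuous_intros continuous_on_compose2[OF pcont] continuous_on_compose2[OF DGc]) auto
  have fxc2: "continuous_on S (fx \<theta>)" for \<theta> S
  proof -
    have "continuous_on UNIV (\<lambda>x. (\<lambda>z. p (snd z) *\<^sub>R (DG z o\<^sub>L E)) (\<theta>, x))"
      by (rule continuous_on_compose2[OF fxc]) (auto intro: continuous_intros)
    then show ?thesis unfolding fx_def by (auto intro: continuous_on_subset)
  qed
  have deriv: "((\<lambda>\<theta>. integral C (\<lambda>x. p x * G (\<theta>, x))) has_derivative blinfun_apply (integral C (fx \<theta>0))) (at \<theta>0)" for \<theta>0
  proof -
    have "((\<lambda>\<theta>. integral (cbox (-a) a) (\<lambda>x. p x * G (\<theta>, x))) has_derivative blinfun_apply (integral (cbox (-a) a) (fx \<theta>0))) (at \<theta>0 within UNIV)"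
    proof (rule leibniz_rule)
      fix \<theta> :: "real ^ 'p" and x :: "real ^ 'i"
      have d1: "((\<lambda>\<theta>. (\<theta>, x)) has_derivative (\<lambda>h. (h, 0))) (at \<theta>)"
        by (auto intro!: derivative_eq_intros)
      have "((\<lambda>\<theta>. G (\<theta>, x)) has_derivative (\<lambda>h. DG (\<theta>, x) (h, 0))) (at \<theta>)"
        by (rule has_derivative_compose[where g=G, OF d1]) (rule DG(1))
      then have "((\<lambda>\<theta>. p x * G (\<theta>, x)) has_derivative (\<lambda>h. p x * DG (\<theta>, x) (h, 0))) (at \<theta>)"
        by (rule has_derivative_mult_right)
      moreover have "blinfun_apply (fx \<theta> x) = (\<lambda>h. p x * DG (\<theta>, x) (h, 0))"
        by (simp add: fx_def Eapp fun_eq_iff blinfun.scaleR_left)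
      ultimately show "((\<lambda>\<theta>. p x * G (\<theta>, x)) has_derivative blinfun_apply (fx \<theta> x)) (at \<theta> within UNIV)"
        by simp
    next
      fix \<theta> show "(\<lambda>x. p x * G (\<theta>, x)) integrable_on cbox (-a) a" by (rule integrable_continuous) (rule Hc)
    next
      have "(\<lambda>(\<theta>, x). fx \<theta> x) = (\<lambda>z. p (snd z) *\<^sub>R (DG z o\<^sub>L E))" by (auto simp: fx_def fun_eq_iff)
      then show "continuous_on (UNIV \<times> cbox (-a) a) (\<lambda>(\<theta>, x). fx \<theta> x)"
        using continuous_on_subset[OF fxc] by simp
    qed auto
    then show ?thesis unfolding C_def by simp
  qed
  have lip: "llip (\<lambda>\<theta>. integral C (fx \<theta>))"
    unfolding llip_def
  proof
    fix \<theta>0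
    obtain e L where e: "e > 0" "L \<ge> 0"
      "\<forall>x\<in>C. \<forall>t1\<in>ball \<theta>0 e. \<forall>t2\<in>ball \<theta>0 e. dist (DG (t1,x)) (DG (t2,x)) \<le> L * dist t1 t2"
      using unif_lip[OF DG(2), of C \<theta>0] unfolding C_def by auto
    have "bounded (p ` C)"
      by (intro compact_imp_bounded compact_continuous_image continuous_on_subset[OF pcont]) (auto simp: C_def)
    then obtain P where P: "P > 0" "\<forall>x\<in>C. \<bar>p x\<bar> \<le> P" unfolding bounded_pos by auto
    define K where "K = P * L * norm E * Henstock_Kurzweil_Integration.content C"
    have K: "K \<ge> 0" unfolding K_def using P e by simp
    have "K-lipschitz_on (ball \<theta>0 e) (\<lambda>\<theta>. integral C (fx \<theta>))"
    proof (rule lipschitz_onI)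
      fix t1 t2 assume t1: "t1 \<in> ball \<theta>0 e" and t2: "t2 \<in> ball \<theta>0 e"
      have int: "fx t integrable_on C" for t unfolding C_def by (rule integrable_continuous) (rule fxc2)
      have "integral C (fx t1) - integral C (fx t2) = integral C (\<lambda>x. fx t1 x - fx t2 x)"
        by (rule integral_diff[symmetric]) (rule int)+
      moreover have "norm (integral C (\<lambda>x. fx t1 x - fx t2 x)) \<le> (P * L * norm E * dist t1 t2) * Henstock_Kurzweil_Integration.content C"
      proof (unfold C_def, rule has_integral_bound)
        show "0 \<le> P * L * norm E * dist t1 t2" using P e by simp
        show "((\<lambda>x. fx t1 x - fx t2 x) has_integral integral (cbox (- a) a) (\<lambda>x. fx t1 x - fx t2 x)) (cbox (- a) a)"
          using int unfolding C_def by (intro integrable_integral integrable_diff) auto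
        fix x assume x: "x \<in> cbox (-a) a"
        have "fx t1 x - fx t2 x = p x *\<^sub>R ((DG (t1, x) - DG (t2, x)) o\<^sub>L E)"
          by (simp add: fx_def bounded_bilinear.diff_left[OF bounded_bilinear_blinfun_compose] scaleR_diff_right)
        then have "norm (fx t1 x - fx t2 x) = \<bar>p x\<bar> * norm ((DG (t1, x) - DG (t2, x)) o\<^sub>L E)" by simp
        also have "\<dots> \<le> P * (norm (DG (t1, x) - DG (t2, x)) * norm E)"
          using P x unfolding C_def by (intro mult_mono norm_blinfun_compose) auto
        also have "\<dots> \<le> P * ((L * dist t1 t2) * norm E)"
          using e(3) x t1 t2 P unfolding C_def by (intro mult_left_mono mult_right_mono) (auto simp: dist_norm)
        finally show "norm (fx t1 x - fx t2 x) \<le> P * L * norm E * dist t1 t2" by (simp add: mult_ac)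
      qed
      ultimately show "dist (integral C (fx t1)) (integral C (fx t2)) \<le> K * dist t1 t2"
        by (simp add: dist_norm K_def mult_ac)
    qed (rule K)
    then show "\<exists>e>0. \<exists>L. L-lipschitz_on (ball \<theta>0 e) (\<lambda>\<theta>. integral C (fx \<theta>))" using e by blast
  qed
  have "C1_loclip (\<lambda>\<theta>. integral C (\<lambda>x. p x * G (\<theta>, x)))"
    by (rule C1I[OF deriv lip])
  then show ?thesis using eqint by simp
qed

theorem corollaryA2:
  fixes ds :: "nat list" and \<psi> :: "real \<Rightarrow> real"
    and l :: "real ^ 'o \<Rightarrow> real ^ 'o \<Rightarrow> real"
    and f :: "real ^ 'i \<Rightarrow> real ^ 'o"
    and \<mu> :: "(real ^ 'i) measure"
  assumes arch: "ds \<noteq> []" "\<forall>d\<in>set ds. d > 0"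
    and dims: "CARD('i) = hd ds" "CARD('o) = last ds" "CARD('p) = nn_dim ds"
    and act: "C1_loclip \<psi>"
    and loss: "loss_fun l" "C1_loclip (\<lambda>(y, z). l y z)"
    and target: "C1_loclip f"
    and prob: "prob_space \<mu>"
    and meas: "(sets \<mu> = sets borel \<and>
        (\<exists>n::nat. n > 0 \<and> (\<exists>xs :: nat \<Rightarrow> real ^ 'i. \<forall>A\<in>sets borel.
            emeasure \<mu> A = ennreal ((\<Sum>i<n. indicator A (xs i)) / real n))))
      \<or> (\<exists>p :: real ^ 'i \<Rightarrow> real. C1_map p \<and> definable_fun p \<and> (\<forall>x. p x \<ge> 0) \<and>
            compact (closure {x. p x \<noteq> 0}) \<and> \<mu> = density lborel (\<lambda>x. ennreal (p x)))"
  shows "C1_loclip (\<lambda>\<theta> :: real ^ 'p. integral\<^sup>L \<mu> (\<lambda>x. l (nn_fun ds \<psi> \<theta> x) (f x)))"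
proof -
  define G where "G = (\<lambda>z :: (real ^ 'p) \<times> (real ^ 'i). l (nn_fun ds \<psi> (fst z) (snd z)) (f (snd z)))"
  have G: "C1_loclip G" unfolding G_def by (rule integrand_C1[OF act loss(2) target])
  have main: "C1_loclip (\<lambda>\<theta> :: real ^ 'p. integral\<^sup>L \<mu> (\<lambda>x. G (\<theta>, x)))"
  proof (cases "sets \<mu> = sets borel \<and>
        (\<exists>n::nat. n > 0 \<and> (\<exists>xs :: nat \<Rightarrow> real ^ 'i. \<forall>A\<in>sets borel.
            emeasure \<mu> A = ennreal ((\<Sum>i<n. indicator A (xs i)) / real n)))")
    case True
    then obtain n xs where "sets \<mu> = sets borel" "n > 0"
      "\<forall>A\<in>sets borel. emeasure \<mu> A = ennreal ((\<Sum>i<n. indicator A (xs i)) / real n)" by blast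
    then show ?thesis by (rule disc_C1[OF G])
  next
    case False
    then obtain p :: "real ^ 'i \<Rightarrow> real" where p: "C1_map p" "\<forall>x. p x \<ge> 0"
      "compact (closure {x. p x \<noteq> 0})" "\<mu> = density lborel (\<lambda>x. ennreal (p x))"
      using meas by blast
    show ?thesis unfolding p(4) by (rule dens_C1[OF G p(1-3)])
  qed
  then show ?thesis unfolding G_def by simp
qed

end
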